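(* Let $K$ be either $\mathbb{Q}$ or a quadratic field $\mathbb{Q}[\sqrt{d}]$ with $d\ne 1$ square-free, let $\mathfrak{o}_K$ be its ring of integers and $C_2=\langle g\rangle$. Then the unit group $\mathcal{U}(\mathfrak{o}_K[C_2])$ is trivial (i.e. consists only of the trivial units $ug$, $u\in\mathcal{U}(\mathfrak{o}_K)$, $g\in C_2$) if and only if $K=\mathbb{Q}$ or $K$ is imaginary quadratic, i.e. $d<0$.
   Context: A unit of the group ring $\mathfrak{o}_K[G]$ is called trivial if it is of the form $ug$ with $u\in\mathcal{U}(\mathfrak{o}_K)$ and $g\in G$. *)

theory Defs
  imports Complex_Main "HOL-Computational_Algebra.Polynomial" "HOL-Computational_Algebra.Squarefree"
begin

text \<open>The field K = Q(sqrt d), realised as a subfield of the complex numbers.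
  For d = 1 this is Q itself.\<close>
definition quad_field :: "int \<Rightarrow> complex set" where
  "quad_field d = {of_rat a + of_rat b * csqrt (of_int d) | a b. True}"

definition algebraic_integer :: "complex \<Rightarrow> bool" where
  "algebraic_integer z \<longleftrightarrow>
     (\<exists>p :: int poly. lead_coeff p = 1 \<and> poly (map_poly of_int p) z = 0)"

definition ring_of_integers :: "int \<Rightarrow> complex set" where
  "ring_of_integers d = {z \<in> quad_field d. algebraic_integer z}"

definition oK_units :: "int \<Rightarrow> complex set" where
  "oK_units d = {u \<in> ring_of_integers d. \<exists>v \<in> ring_of_integers d. u * v = 1}"

text \<open>The group ring o_K[C_2], C_2 = <g>: the element x + y g is represented by
  the pair (x, y) with x, y in o_K; multiplication uses g^2 = 1.\<close>
definition c2_mult :: "complex \<times> complex \<Rightarrow> complex \<times> complex \<Rightarrow> complex \<times> complex" where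
  "c2_mult p q = (fst p * fst q + snd p * snd q, fst p * snd q + snd p * fst q)"

definition group_ring_C2 :: "int \<Rightarrow> (complex \<times> complex) set" where
  "group_ring_C2 d = ring_of_integers d \<times> ring_of_integers d"

text \<open>The unit group U(o_K[C_2]) (the ring is commutative, identity is (1,0) = 1*e).\<close>
definition group_ring_C2_units :: "int \<Rightarrow> (complex \<times> complex) set" where
  "group_ring_C2_units d =
     {a \<in> group_ring_C2 d. \<exists>b \<in> group_ring_C2 d. c2_mult a b = (1, 0)}"

text \<open>Trivial units u*h with u in U(o_K), h in C_2 = {1, g}:
  u*1 = (u,0) and u*g = (0,u).\<close>
definition trivial_units_C2 :: "int \<Rightarrow> (complex \<times> complex) set" where
  "trivial_units_C2 d = {(u, 0) | u. u \<in> oK_units d} \<union> {(0, u) | u. u \<in> oK_units d}"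

end

theory Submission
  imports Defs "HOL-Analysis.Kronecker_Approximation_Theorem"
begin


lemma map_of_int_smult: "map_poly (of_int :: int \<Rightarrow> 'a::comm_ring_1) (smult c p) = smult (of_int c) (map_poly of_int p)"
  by (rule poly_eqI) (simp add: coeff_map_poly)

lemma map_of_int_mult: "map_poly (of_int :: int \<Rightarrow> 'a::comm_ring_1) (p * q) = map_poly of_int p * map_poly of_int q"
  apply (rule poly_eqI) apply (simp only: coeff_map_poly of_int_0 coeff_mult of_int_sum of_int_mult) done

lemma map_of_int_inj: "map_poly (of_int :: int \<Rightarrow> 'a::{comm_ring_1,ring_char_0}) p = map_poly of_int q \<Longrightarrow> p = q"
  by (metis (no_types, lifting) coeff_map_poly of_int_0 of_int_eq_iff poly_eqI)

lemma lead_map_of_int: "lead_coeff (map_poly (of_int :: int \<Rightarrow> 'a::{comm_ring_1,ring_char_0}) p) = of_int (lead_coeff p)"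
  by (cases "p = 0") (auto intro: lead_coeff_map_poly_nz)

lemma rat_poly_denom:
  fixes q :: "rat poly"
  shows "\<exists>A::int. A > 0 \<and> (\<exists>Q::int poly. map_poly of_int Q = smult (of_int A) q)"
proof (induction q rule: pCons_induct)
  case 0
  show ?case by (rule exI[of _ 1]) (auto intro: exI[of _ 0])
next
  case (pCons a q)
  then obtain A' Q' where A': "A' > 0" "map_poly of_int Q' = smult (of_int A') q" by auto
  obtain n m where nm: "quotient_of a = (n, m)" by (cases "quotient_of a")
  have m: "m > 0" using quotient_of_denom_pos[OF nm] .
  have a: "a = of_int n / of_int m" using quotient_of_div[OF nm] .
  show ?case
  proof (intro exI conjI)
    show "A' * m > 0" using A' m by simp
    show "map_poly of_int (pCons (A' * n) (smult m Q')) = smult (of_int (A' * m)) (pCons a q)"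
      using A'(2) m by (simp add: a map_poly_pCons map_of_int_smult mult.commute)
  qed
qed

lemma content_monic: "lead_coeff (p::int poly) = 1 \<Longrightarrow> Polynomial.content p = 1"
proof -
  assume "lead_coeff p = 1"
  hence "Polynomial.content p dvd 1" by (metis content_dvd_coeff)
  moreover have "Polynomial.content p \<ge> 0" by (metis normalize_content abs_ge_zero normalize_int_def)
  ultimately show ?thesis by (simp add: int_one_le_iff_zero_less zdvd1_eq)
qed

lemma gauss_monic:
  fixes p :: "int poly" and q r :: "rat poly"
  assumes p1: "lead_coeff p = 1" and pqr: "map_poly of_int p = q * r" and q1: "lead_coeff q = 1"
  shows "\<exists>Q0. q = map_poly of_int Q0"
proof -
  have lp: "lead_coeff (map_poly (of_int :: int \<Rightarrow> rat) p) = 1" using p1 by (simp add: lead_map_of_int)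
  have r1: "lead_coeff r = 1" using lp q1 unfolding pqr lead_coeff_mult by simp
  obtain A Q where A: "A > 0" "map_poly of_int Q = smult (of_int A) q" using rat_poly_denom by blast
  obtain B R where B: "B > 0" "map_poly of_int R = smult (of_int B) r" using rat_poly_denom by blast
  have "map_poly (of_int :: int \<Rightarrow> rat) (Q * R) = map_poly of_int (smult (A*B) p)"
    by (simp add: map_of_int_mult map_of_int_smult A(2) B(2) pqr mult_ac)
  hence QR: "Q * R = smult (A*B) p" by (rule map_of_int_inj)
  have cc: "Polynomial.content Q * Polynomial.content R = A * B"
    using QR content_mult[of Q R] content_monic[OF p1] A B by (simp add: abs_mult)
  have lQ: "lead_coeff Q = A"
  proof -
    have "(of_int (lead_coeff Q) :: rat) = lead_coeff (map_poly of_int Q)" by (simp add: lead_map_of_int)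
    also have "\<dots> = of_int A" using A q1 by simp
    finally show ?thesis by simp
  qed
  have lR: "lead_coeff R = B"
  proof -
    have "(of_int (lead_coeff R) :: rat) = lead_coeff (map_poly of_int R)" by (simp add: lead_map_of_int)
    also have "\<dots> = of_int B" using B r1 by simp
    finally show ?thesis by simp
  qed
  define cQ where "cQ = Polynomial.content Q"
  define cR where "cR = Polynomial.content R"
  have cQ0: "cQ \<ge> 0" "cR \<ge> 0" unfolding cQ_def cR_def by (metis normalize_content abs_ge_zero normalize_int_def)+
  have eQ: "lead_coeff Q = cQ * lead_coeff (primitive_part Q)"
    unfolding cQ_def by (metis content_times_primitive_part lead_coeff_smult)
  have eR: "lead_coeff R = cR * lead_coeff (primitive_part R)"
    unfolding cR_def by (metis content_times_primitive_part lead_coeff_smult)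
  have "cQ * cR = cQ * cR * (lead_coeff (primitive_part Q) * lead_coeff (primitive_part R))"
    using cc eQ eR lQ lR unfolding cQ_def cR_def by (simp add: mult_ac)
  moreover have "cQ * cR \<noteq> 0" using cc A B cQ_def cR_def by simp
  ultimately have "lead_coeff (primitive_part Q) * lead_coeff (primitive_part R) = 1" by simp
  hence "lead_coeff (primitive_part Q) = 1 \<or> lead_coeff (primitive_part Q) = -1"
    using zmult_eq_1_iff by blast
  hence cQA: "cQ = A" using eQ lQ A cQ0 by auto
  have "map_poly (of_int :: int \<Rightarrow> rat) Q = smult (of_int A) (map_poly of_int (primitive_part Q))"
    by (metis cQA cQ_def content_times_primitive_part map_of_int_smult)
  hence "smult (of_int A) q = smult (of_int A) (map_poly of_int (primitive_part Q))" using A by simp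
  hence "q = map_poly of_int (primitive_part Q)" by (rule smult_cancel[rotated]) (use A in simp)
  thus ?thesis by blast
qed


lemma map_of_rat_mult: "map_poly (of_rat :: rat \<Rightarrow> 'a::field_char_0) (p * q) = map_poly of_rat p * map_poly of_rat q"
  apply (rule poly_eqI) apply (simp only: coeff_map_poly of_rat_0 coeff_mult of_rat_sum of_rat_mult) done

lemma map_of_rat_add: "map_poly (of_rat :: rat \<Rightarrow> 'a::field_char_0) (p + q) = map_poly of_rat p + map_poly of_rat q"
  apply (rule poly_eqI) apply (simp only: coeff_map_poly of_rat_0 coeff_add of_rat_add) done

lemma map_of_rat_of_int: "map_poly (of_rat :: rat \<Rightarrow> 'a::field_char_0) (map_poly of_int p) = map_poly of_int p"
  apply (rule poly_eqI) apply (simp add: coeff_map_poly) done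

lemma poly_of_rat_eval: "poly (map_poly (of_rat :: rat \<Rightarrow> 'a::field_char_0) P) (of_rat x) = of_rat (poly P x)"
  by (induction P rule: pCons_induct) (simp_all add: map_poly_pCons of_rat_add of_rat_mult)

lemma poly_cnj_int: "poly (map_poly (of_int :: int \<Rightarrow> complex) p) (cnj z) = cnj (poly (map_poly of_int p) z)"
  by (induction p rule: pCons_induct) (simp_all add: map_poly_pCons)

lemma rat_alg_int:
  assumes "algebraic_integer (of_rat a)"
  shows "\<exists>n::int. a = of_int n"
proof -
  obtain p :: "int poly" where p: "lead_coeff p = 1" "poly (map_poly of_int p) (of_rat a :: complex) = 0"
    using assms unfolding algebraic_integer_def by blast
  define P where "P = (map_poly of_int p :: rat poly)"
  have "(of_rat (poly P a) :: complex) = 0"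
    using p(2) poly_of_rat_eval[of P a, where 'a=complex] unfolding P_def by (simp add: map_of_rat_of_int)
  hence "poly P a = 0" by simp
  hence "[:-a, 1:] dvd P" by (simp add: poly_eq_0_iff_dvd)
  then obtain r where "P = [:-a, 1:] * r" by blast
  from gauss_monic[OF p(1) this[unfolded P_def]] obtain Q0 where "[:-a, 1:] = map_poly of_int Q0" by auto
  hence "coeff [:-a, 1:] 0 = coeff (map_poly (of_int :: int \<Rightarrow> rat) Q0) 0" by simp
  hence "-a = of_int (coeff Q0 0)" by (simp add: coeff_map_poly)
  hence "a = of_int (- coeff Q0 0)" by simp
  thus ?thesis by blast
qed



lemma cnj_of_rat [simp]: "cnj (of_rat a) = of_rat a"
  by (cases a) (simp add: of_rat_rat)

lemma csqrt_neg_int: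
  assumes "d < 0"
  shows "csqrt (of_int d) = \<i> * of_real (sqrt (- of_int d))"
proof -
  have "csqrt (of_int d) = \<i> * sqrt \<bar>Re (of_int d)\<bar>" using assms by (intro csqrt_of_real_nonpos) auto
  thus ?thesis using assms by simp
qed

lemma deg1_poly:
  fixes r :: "'a::comm_ring_1 poly"
  assumes "degree r \<le> 1"
  shows "r = [:coeff r 0, coeff r 1:]"
  apply (rule poly_eqI)
  subgoal for n using assms by (cases n) (auto simp: coeff_eq_0 coeff_pCons split: nat.splits)
  done

lemma quad_dvd:
  fixes P q :: "rat poly" and z w :: complex
  assumes "poly (map_poly of_rat P) z = 0" "poly (map_poly of_rat P) w = 0"
    "poly (map_poly of_rat q) z = 0" "poly (map_poly of_rat q) w = 0"
    "degree q = 2" "z \<noteq> w"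
  shows "q dvd P"
proof -
  have q0: "q \<noteq> 0" using assms(5) by auto
  define r where "r = P mod q"
  have "P = q * (P div q) + r" unfolding r_def by simp
  hence "map_poly (of_rat :: rat \<Rightarrow> complex) P = map_poly of_rat q * map_poly of_rat (P div q) + map_poly of_rat r"
    by (metis map_of_rat_add map_of_rat_mult)
  hence rz: "poly (map_poly of_rat r) z = 0" "poly (map_poly of_rat r) w = 0"
    using assms(1-4) by (metis add_0 mult_zero_left poly_add poly_mult)+
  have "degree r \<le> 1" using degree_mod_less[OF q0, of P] assms(5) unfolding r_def by auto
  hence re: "r = [:coeff r 0, coeff r 1:]" by (rule deg1_poly)
  define r0 r1 where "r0 = coeff r 0" "r1 = coeff r 1"
  have "map_poly (of_rat :: rat \<Rightarrow> complex) r = [:of_rat r0, of_rat r1:]"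
    by (subst re) (simp add: map_poly_pCons r0_r1_def)
  hence e: "of_rat r0 + of_rat r1 * z = 0" "of_rat r0 + of_rat r1 * w = 0" using rz by (simp_all add: mult.commute)
  have "of_rat r1 * (z - w) = (of_rat r0 + of_rat r1 * z) - (of_rat r0 + of_rat r1 * w)" by (simp add: algebra_simps)
  hence "of_rat r1 * (z - w) = 0" using e by simp
  hence "r1 = 0" using assms(6) by simp
  hence "r0 = 0" using e by simp
  hence "r = 0" using re \<open>r1 = 0\<close> r0_r1_def by simp
  thus ?thesis unfolding r_def by (simp add: mod_eq_0_iff_dvd)
qed



lemma char_neg:
  assumes d: "d < 0" "squarefree d" and z: "z \<in> ring_of_integers d"
  shows "\<exists>A B::int. z = (of_int A + of_int B * csqrt (of_int d)) / 2 \<and> 4 dvd A^2 - d*B^2"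
proof -
  define s where "s = csqrt (of_int d)"
  obtain a b where zab: "z = of_rat a + of_rat b * s"
    using z unfolding ring_of_integers_def quad_field_def s_def by blast
  obtain p :: "int poly" where p: "lead_coeff p = 1" "poly (map_poly of_int p) z = 0"
    using z unfolding ring_of_integers_def algebraic_integer_def by blast
  define P where "P = (map_poly of_int p :: rat poly)"
  have Pz: "poly (map_poly of_rat P) z = 0" using p(2) unfolding P_def by (simp add: map_of_rat_of_int)
  show ?thesis
  proof (cases "b = 0")
    case True
    hence "algebraic_integer (of_rat a)" using z zab unfolding ring_of_integers_def by simp
    then obtain n where n: "a = of_int n" using rat_alg_int by blast
    show ?thesis
    proof (intro exI conjI)
      show "z = (of_int (2*n) + of_int 0 * csqrt (of_int d)) / 2" using zab True n by simp
      show "4 dvd (2*n)^2 - d * 0^2" by (simp add: power2_eq_square)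
    qed
  next
    case False
    define c where "c = a^2 - of_int d * b^2"
    define q where "q = [:c, -2*a, 1:]"
    have ss: "s * s = of_int d" unfolding s_def by (metis power2_csqrt power2_eq_square)
    have s0: "s \<noteq> 0" unfolding s_def using d by simp
    have cs: "cnj s = - s" unfolding s_def using d by (simp add: csqrt_neg_int)
    define w where "w = cnj z"
    have wab: "w = of_rat a - of_rat b * s" unfolding w_def zab using cs by simp
    have Pw: "poly (map_poly of_rat P) w = 0"
      unfolding w_def P_def map_of_rat_of_int poly_cnj_int using p(2) by simp
    have mq: "map_poly (of_rat :: rat \<Rightarrow> complex) q = [:of_rat c, - 2 * of_rat a, 1:]"
      unfolding q_def by (simp add: map_poly_pCons of_rat_minus of_rat_mult)
    have ocr: "(of_rat c :: complex) = of_rat a * of_rat a - of_int d * (of_rat b * of_rat b)"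
      unfolding c_def by (simp add: of_rat_diff of_rat_mult power2_eq_square)
    have qz: "poly (map_poly of_rat q) z = 0"
    proof -
      have "poly (map_poly of_rat q) z = of_rat b * of_rat b * (s * s) - of_int d * (of_rat b * of_rat b)"
        unfolding mq zab ocr by (simp add: algebra_simps)
      thus ?thesis using ss by simp
    qed
    have qw: "poly (map_poly of_rat q) w = 0"
    proof -
      have "poly (map_poly of_rat q) w = of_rat b * of_rat b * (s * s) - of_int d * (of_rat b * of_rat b)"
        unfolding mq wab ocr by (simp add: algebra_simps)
      thus ?thesis using ss by simp
    qed
    have zw: "z \<noteq> w"
    proof
      assume "z = w"
      hence "2 * of_rat b * s = 0" unfolding zab wab by (simp add: algebra_simps)
      thus False using False s0 by simp
    qed
    have "q dvd P" by (rule quad_dvd[OF Pz Pw qz qw _ zw]) (simp add: q_def)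
    then obtain r where "P = q * r" by blast
    from gauss_monic[OF p(1) this[unfolded P_def]] obtain Q0 where Q0: "q = map_poly of_int Q0"
      by (auto simp: q_def)
    have "coeff q 0 = coeff (map_poly (of_int :: int \<Rightarrow> rat) Q0) 0" "coeff q 1 = coeff (map_poly (of_int :: int \<Rightarrow> rat) Q0) 1"
      using Q0 by simp_all
    hence cC: "c = of_int (coeff Q0 0)" and aA: "-2*a = of_int (coeff Q0 1)"
      by (simp_all add: q_def coeff_map_poly)
    define A where "A = - coeff Q0 1"
    define C where "C = coeff Q0 0"
    have a2: "2 * a = of_int A" using aA unfolding A_def by simp
    obtain n m where nm: "quotient_of (2*b) = (n, m)" by (cases "quotient_of (2*b)")
    have m0: "m > 0" using quotient_of_denom_pos[OF nm] .
    have b2: "2 * b = of_int n / of_int m" using quotient_of_div[OF nm] .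
    have cop: "coprime n m" using quotient_of_coprime[OF nm] .
    have "of_int d * (2*b)^2 = (2*a)^2 - 4 * c" unfolding c_def by (simp add: algebra_simps power2_eq_square)
    hence "(of_int d :: rat) * (of_int n / of_int m)^2 = of_int (A^2 - 4*C)"
      unfolding b2 a2 cC C_def by simp
    hence "(of_int d :: rat) * of_int n^2 = of_int (A^2 - 4*C) * of_int m^2"
      using m0 by (simp add: field_simps power2_eq_square)
    hence ieq: "d * n^2 = (A^2 - 4*C) * m^2"
      by (metis of_int_eq_iff of_int_mult of_int_power)
    hence "m^2 dvd d * n^2" by (metis dvd_triv_right)
    moreover have "coprime (m^2) (n^2)" using cop by (simp add: coprime_commute)
    ultimately have "m^2 dvd d" using coprime_dvd_mult_left_iff by blast
    hence "m dvd 1" using d(2) squarefreeD by blast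
    hence m1: "m = 1" using m0 by simp
    show ?thesis
    proof (intro exI conjI)
      have "of_rat b = (of_int n / 2 :: complex)"
      proof -
        have "b = of_int n / 2" using b2 m1 by simp
        thus ?thesis by (simp only: of_rat_divide of_rat_of_int_eq of_rat_numeral_eq)
      qed
      moreover have "of_rat a = (of_int A / 2 :: complex)"
      proof -
        have "a = of_int A / 2" using a2 by simp
        thus ?thesis by (simp only: of_rat_divide of_rat_of_int_eq of_rat_numeral_eq)
      qed
      ultimately show "z = (of_int A + of_int n * csqrt (of_int d)) / 2"
        unfolding zab s_def by (simp add: field_simps)
      show "4 dvd A^2 - d * n^2" using ieq m1 by simp
    qed
  qed
qed



lemma par2:
  fixes d A1 B1 A2 B2 :: int
  assumes h1: "4 dvd A1^2 - d*B1^2" and h2: "4 dvd A2^2 - d*B2^2"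
  shows "2 dvd A1*A2 - d*B1*B2"
proof -
  have e1: "even (A1^2 - d*B1^2)" using h1 by (rule dvd_trans[rotated]) simp
  have e2: "even (A2^2 - d*B2^2)" using h2 by (rule dvd_trans[rotated]) simp
  show ?thesis
  proof (cases "even d")
    case True
    hence "even A1" "even A2" using e1 e2 by auto
    thus ?thesis using True by auto
  next
    case False
    hence "even A1 \<longleftrightarrow> even B1" "even A2 \<longleftrightarrow> even B2" using e1 e2 by auto
    thus ?thesis using False by auto
  qed
qed

lemma rep_add:
  fixes d A1 B1 A2 B2 :: int
  assumes h1: "4 dvd A1^2 - d*B1^2" and h2: "4 dvd A2^2 - d*B2^2"
  shows "4 dvd (A1+A2)^2 - d*(B1+B2)^2" "4 dvd (A1-A2)^2 - d*(B1-B2)^2"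
proof -
  obtain c where c: "A1*A2 - d*B1*B2 = 2*c" using par2[OF h1 h2] by blast
  have "(A1+A2)^2 - d*(B1+B2)^2 = (A1^2 - d*B1^2) + (A2^2 - d*B2^2) + 4*c"
    using c by (simp add: algebra_simps power2_eq_square)
  thus "4 dvd (A1+A2)^2 - d*(B1+B2)^2" using h1 h2 by simp
  have "(A1-A2)^2 - d*(B1-B2)^2 = (A1^2 - d*B1^2) + (A2^2 - d*B2^2) - 4*c"
    using c by (simp add: algebra_simps power2_eq_square)
  thus "4 dvd (A1-A2)^2 - d*(B1-B2)^2" using h1 h2 by simp
qed

definition isrep :: "int \<Rightarrow> complex \<Rightarrow> bool" where
  "isrep d z \<longleftrightarrow> (\<exists>A B::int. z = (of_int A + of_int B * csqrt (of_int d)) / 2 \<and> 4 dvd A^2 - d*B^2)"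

lemma isrep_add: "isrep d z \<Longrightarrow> isrep d w \<Longrightarrow> isrep d (z + w)"
proof -
  assume "isrep d z" "isrep d w"
  then obtain A1 B1 A2 B2 where r: "z = (of_int A1 + of_int B1 * csqrt (of_int d)) / 2" "4 dvd A1^2 - d*B1^2"
    "w = (of_int A2 + of_int B2 * csqrt (of_int d)) / 2" "4 dvd A2^2 - d*B2^2"
    unfolding isrep_def by blast
  have "z + w = (of_int (A1+A2) + of_int (B1+B2) * csqrt (of_int d)) / 2"
    unfolding r by (simp add: field_simps)
  thus ?thesis unfolding isrep_def using rep_add(1)[OF r(2) r(4)] by blast
qed

lemma isrep_diff: "isrep d z \<Longrightarrow> isrep d w \<Longrightarrow> isrep d (z - w)"
proof -
  assume "isrep d z" "isrep d w"
  then obtain A1 B1 A2 B2 where r: "z = (of_int A1 + of_int B1 * csqrt (of_int d)) / 2" "4 dvd A1^2 - d*B1^2"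
    "w = (of_int A2 + of_int B2 * csqrt (of_int d)) / 2" "4 dvd A2^2 - d*B2^2"
    unfolding isrep_def by blast
  have "z - w = (of_int (A1-A2) + of_int (B1-B2) * csqrt (of_int d)) / 2"
    unfolding r by (simp add: field_simps)
  thus ?thesis unfolding isrep_def using rep_add(2)[OF r(2) r(4)] by blast
qed

lemma isrep_norm:
  assumes d: "d < 0" and r: "isrep d z"
  shows "\<exists>k::int. k \<ge> 0 \<and> (cmod z)^2 = of_int k"
proof -
  obtain A B where r: "z = (of_int A + of_int B * csqrt (of_int d)) / 2" "4 dvd A^2 - d*B^2"
    using r unfolding isrep_def by blast
  obtain k where k: "A^2 - d*B^2 = 4 * k" using r(2) by blast
  define t where "t = sqrt (- of_int d)"
  have tt: "t^2 = - of_int d" unfolding t_def using d by simp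
  have zz: "z = (of_int A + of_int B * (\<i> * of_real t)) / 2" unfolding r(1) t_def using d by (simp add: csqrt_neg_int)
  have ri: "Re z = of_int A / 2" "Im z = of_int B * t / 2" unfolding zz by simp_all
  have "(cmod z)^2 = (Re z)^2 + (Im z)^2" by (rule cmod_power2)
  also have "\<dots> = (of_int A / 2)^2 + (of_int B * t / 2)^2" unfolding ri ..
  also have "\<dots> = (of_int A^2 + of_int B^2 * t^2) / 4" by (simp add: power2_eq_square field_simps)
  also have "\<dots> = of_int (A^2 - d*B^2) / 4" using tt by simp
  also have "\<dots> = of_int k" using k by simp
  finally have n: "(cmod z)^2 = of_int k" .
  have "0 \<le> (cmod z)^2" by simp
  hence "k \<ge> 0" using n by simp
  thus ?thesis using n by blast
qed

lemma int_prod_one: "(a::int) \<ge> 0 \<Longrightarrow> b \<ge> 0 \<Longrightarrow> (of_int a::real) * of_int b = 1 \<Longrightarrow> a = 1"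
proof -
  assume "a \<ge> 0" "b \<ge> 0" "(of_int a::real) * of_int b = 1"
  hence "a * b = 1" by (metis of_int_1 of_int_eq_iff of_int_mult)
  thus "a = 1" using \<open>a \<ge> 0\<close> by (simp add: zmult_eq_1_iff) 
qed



lemma sqrt_nonsquare_irrat:
  fixes d :: int
  assumes "d > 0" "\<And>k. k^2 \<noteq> d"
  shows "sqrt (of_int d) \<notin> \<rat>"
proof
  assume "sqrt (of_int d) \<in> \<rat>"
  then obtain n m where nm: "sqrt (of_int d) = of_int n / of_int m" "m > 0" "coprime n m"
    by (meson Rats_cases')
  have "(of_int d :: real) = (of_int n / of_int m)^2" using assms(1) nm(1)[symmetric] by simp
  hence "(of_int d :: real) * of_int m^2 = of_int n^2" using nm(2) by (simp add: field_simps power2_eq_square)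
  hence e: "d * m^2 = n^2" by (metis of_int_eq_iff of_int_mult of_int_power)
  hence "m^2 dvd n^2" by (metis dvd_triv_right)
  moreover have "coprime (m^2) (n^2)" using nm(3) by (simp add: coprime_commute)
  ultimately have "is_unit (m^2)" by (meson coprime_common_divisor dvd_refl)
  hence "m = 1" using nm(2) by (simp add: power2_eq_square zmult_eq_1_iff)
  thus False using e assms(2)[of n] by simp
qed

lemma pell_bound:
  fixes d h k :: int
  assumes d: "d > 0" and k: "k > 0"
    and ap: "\<bar>sqrt (of_int d) - of_int h / of_int k\<bar> < 1 / (of_int k)^2"
  shows "\<bar>h^2 - d * k^2\<bar> \<le> \<lceil>1 + 2 * sqrt (of_int d)\<rceil>"
proof -
  define t where "t = sqrt (of_int d)"
  have t0: "t \<ge> 0" unfolding t_def using d by simp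
  have tt: "t * t = of_int d" unfolding t_def using d by (simp add: less_imp_le)
  have kr: "(of_int k :: real) \<ge> 1" using k by simp
  have e1: "\<bar>of_int h - of_int k * t\<bar> < 1 / of_int k"
  proof -
    have "\<bar>of_int h - of_int k * t\<bar> = of_int k * \<bar>t - of_int h / of_int k\<bar>"
      using k by (simp add: field_simps abs_mult[symmetric] abs_minus_commute)
    also have "\<dots> < of_int k * (1 / (of_int k)^2)" using ap k unfolding t_def by (intro mult_strict_left_mono) auto
    also have "\<dots> = 1 / of_int k" using k by (simp add: power2_eq_square)
    finally show ?thesis .
  qed
  have ik: "1 / (of_int k :: real) \<le> 1" using kr by simp
  have e2: "\<bar>of_int h + of_int k * t\<bar> \<le> 1 + 2 * of_int k * t"
  proof -
    have kt: "0 \<le> 2 * of_int k * t" using t0 k by simp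
    have "\<bar>of_int h + of_int k * t\<bar> \<le> \<bar>of_int h - of_int k * t\<bar> + \<bar>2 * of_int k * t\<bar>"
      using abs_triangle_ineq[of "of_int h - of_int k * t" "2 * of_int k * t"] by (simp add: algebra_simps)
    thus ?thesis using kt e1 ik by linarith
  qed
  have "(of_int \<bar>h^2 - d * k^2\<bar> :: real) = \<bar>of_int h - of_int k * t\<bar> * \<bar>of_int h + of_int k * t\<bar>"
  proof -
    have "(of_int (h^2 - d * k^2) :: real) = (of_int h - of_int k * t) * (of_int h + of_int k * t)"
      using tt by (simp add: algebra_simps power2_eq_square)
    thus ?thesis by (simp add: abs_mult)
  qed
  also have "\<dots> \<le> (1 / of_int k) * (1 + 2 * of_int k * t)"
    using e1 e2 k by (intro mult_mono) auto
  also have "\<dots> = 1 / of_int k + 2 * t" using k by (simp add: field_simps)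
  also have "\<dots> \<le> 1 + 2 * t" using ik by simp
  also have "\<dots> \<le> of_int \<lceil>1 + 2 * t\<rceil>" by simp
  finally show ?thesis unfolding t_def by linarith
qed



lemma pell_identity:
  fixes d h1 h2 k1 k2 :: int
  shows "(h1*h2 - d*k1*k2)^2 - d*(h1*k2 - h2*k1)^2 = (h1^2 - d*k1^2) * (h2^2 - d*k2^2)"
  by (simp add: algebra_simps power2_eq_square)

lemma pell:
  fixes d :: int
  assumes d: "d > 0" "\<And>k. k^2 \<noteq> d"
  shows "\<exists>a b. b \<noteq> 0 \<and> a^2 - d*b^2 = 1"
proof -
  define \<theta> where "\<theta> = sqrt (of_int d)"
  define S where "S = approx_set \<theta>"
  have irr: "\<theta> \<notin> \<rat>" unfolding \<theta>_def using sqrt_nonsquare_irrat d by blast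
  have inf: "infinite S" unfolding S_def using rational_iff_finite_approx_set irr by blast
  define M where "M = \<lceil>1 + 2 * \<theta>\<rceil>"
  have Sk: "k > 0" and Sb: "\<bar>\<theta> - of_int h / of_int k\<bar> < 1 / (of_int k)^2" if "(h, k) \<in> S" for h k
    using that unfolding S_def approx_set_def by auto
  have Nnz: "h^2 - d*k^2 \<noteq> 0" if "(h, k) \<in> S" for h k
  proof
    assume "h^2 - d*k^2 = 0"
    hence "(of_int h :: real)^2 = of_int d * (of_int k)^2" by (metis eq_iff_diff_eq_0 of_int_eq_iff of_int_mult of_int_power)
    hence "sqrt ((of_int h)^2) = sqrt (of_int d * (of_int k)^2)" by simp
    hence "\<bar>of_int h\<bar> = \<theta> * of_int k" unfolding \<theta>_def using Sk[OF that] by (simp add: real_sqrt_mult)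
    hence "\<theta> = of_int \<bar>h\<bar> / of_int k" using Sk[OF that] by (simp add: field_simps)
    hence "\<theta> \<in> \<rat>" by simp
    thus False using irr by blast
  qed
  have Nb: "\<bar>h^2 - d*k^2\<bar> \<le> M" if "(h, k) \<in> S" for h k
    unfolding M_def \<theta>_def by (rule pell_bound[OF d(1) Sk[OF that] Sb[OF that, unfolded \<theta>_def]])
  define f where "f = (\<lambda>(h::int, k::int). (h^2 - d*k^2, h mod (h^2 - d*k^2), k mod (h^2 - d*k^2)))"
  have modb: "\<bar>a mod n\<bar> \<le> \<bar>n\<bar>" if "n \<noteq> 0" for a n :: int
  proof (cases "n > 0")
    case True thus ?thesis using pos_mod_sign[OF True, of a] pos_mod_bound[OF True, of a] by simp
  next
    case False hence "n < 0" using that by simp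
    thus ?thesis using neg_mod_sign[of n a] neg_mod_bound[of n a] by linarith
  qed
  have "f ` S \<subseteq> {-M..M} \<times> {-M..M} \<times> {-M..M}"
  proof
    fix x assume "x \<in> f ` S"
    then obtain h k where hk: "(h, k) \<in> S" "x = f (h, k)" by auto
    have n0: "h^2 - d*k^2 \<noteq> 0" using Nnz[OF hk(1)] .
    have "\<bar>h^2 - d*k^2\<bar> \<le> M" using Nb[OF hk(1)] .
    moreover have "\<bar>h mod (h^2 - d*k^2)\<bar> \<le> M" using modb[OF n0, of h] Nb[OF hk(1)] by linarith
    moreover have "\<bar>k mod (h^2 - d*k^2)\<bar> \<le> M" using modb[OF n0, of k] Nb[OF hk(1)] by linarith
    ultimately show "x \<in> {-M..M} \<times> {-M..M} \<times> {-M..M}" unfolding hk(2) f_def by auto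
  qed
  hence "finite (f ` S)" by (rule finite_subset) auto
  hence "\<not> inj_on f S" using inf finite_imageD by blast
  then obtain x y where xy: "x \<in> S" "y \<in> S" "x \<noteq> y" "f x = f y" unfolding inj_on_def by blast
  obtain h1 k1 where x: "x = (h1, k1)" by (cases x)
  obtain h2 k2 where y: "y = (h2, k2)" by (cases y)
  define n where "n = h1^2 - d*k1^2"
  have n0: "n \<noteq> 0" unfolding n_def using Nnz xy(1) x by blast
  have fe0: "(n, h1 mod n, k1 mod n) = (h2^2 - d*k2^2, h2 mod (h2^2 - d*k2^2), k2 mod (h2^2 - d*k2^2))"
    using xy(4) unfolding x y f_def n_def by (simp only: prod.case)
  have fe1: "h2^2 - d*k2^2 = n" using fe0 by (simp only: prod.inject)
  have fe: "h2^2 - d*k2^2 = n" "h1 mod n = h2 mod n" "k1 mod n = k2 mod n"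
    using fe0 unfolding fe1 by (simp_all only: prod.inject)
  have "n dvd h2 - h1" using fe(2) by (simp only: mod_eq_dvd_iff[symmetric])
  then obtain t where "h2 - h1 = n * t" by (rule dvdE)
  hence t: "h2 = h1 + n * t" by simp
  have "n dvd k2 - k1" using fe(3) by (simp only: mod_eq_dvd_iff[symmetric])
  then obtain u where "k2 - k1 = n * u" by (rule dvdE)
  hence u: "k2 = k1 + n * u" by simp
  define X where "X = 1 + h1*t - d*k1*u"
  define Y where "Y = h1*u - t*k1"
  have X': "h1*h2 - d*k1*k2 = n * X" unfolding X_def t u n_def by (simp add: algebra_simps power2_eq_square)
  have Y': "h1*k2 - h2*k1 = n * Y" unfolding Y_def t u by (simp add: algebra_simps)
  have "(n*X)^2 - d*(n*Y)^2 = n * n"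
    using pell_identity[of h1 h2 d k1 k2] X' Y' fe(1) unfolding n_def by simp
  hence "n^2 * (X^2 - d*Y^2) = n^2 * 1" by (simp add: algebra_simps power2_eq_square)
  hence XY: "X^2 - d*Y^2 = 1" using n0 by simp
  have "Y \<noteq> 0"
  proof
    assume "Y = 0"
    hence hk: "h1*k2 = h2*k1" using Y' by simp
    have k1p: "k1 > 0" using Sk xy(1) x by blast
    have k2p: "k2 > 0" using Sk xy(2) y by blast
    have "k2^2 * n = k1^2 * n"
    proof -
      have "k2^2 * n = (h1*k2)^2 - d*k1^2*k2^2" unfolding n_def by (simp add: algebra_simps power2_eq_square)
      also have "\<dots> = (h2*k1)^2 - d*k1^2*k2^2" using hk by simp
      also have "\<dots> = k1^2 * (h2^2 - d*k2^2)" by (simp add: algebra_simps power2_eq_square)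
      finally show ?thesis using fe(1) by simp
    qed
    hence "k2^2 = k1^2" using n0 by simp
    hence "k2 = k1" using k1p k2p using power2_eq_iff[of k2 k1] by auto
    moreover hence "h1 = h2" using hk k1p by simp
    ultimately show False using xy(3) x y by simp
  qed
  thus ?thesis using XY by blast
qed



lemma int_in_oK: "of_int n \<in> ring_of_integers d"
proof -
  have "of_int n \<in> quad_field d" unfolding quad_field_def
    by (rule CollectI, rule exI[of _ "of_int n"], rule exI[of _ 0]) simp
  moreover have "algebraic_integer (of_int n)" unfolding algebraic_integer_def
    by (rule exI[of _ "[:-n, 1:]"]) (simp add: map_poly_pCons)
  ultimately show ?thesis unfolding ring_of_integers_def by blast
qed

lemma zero_in_oK: "0 \<in> ring_of_integers d"
  using int_in_oK[of 0 d] by simp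

lemma sqrt_mult_in_oK: "of_int c * csqrt (of_int d) \<in> ring_of_integers d"
proof -
  have "of_int c * csqrt (of_int d) \<in> quad_field d" unfolding quad_field_def
    by (rule CollectI, rule exI[of _ 0], rule exI[of _ "of_int c"]) simp
  moreover have "algebraic_integer (of_int c * csqrt (of_int d))" unfolding algebraic_integer_def
  proof (rule exI[of _ "[:-(c^2*d), 0, 1:]"], intro conjI)
    show "lead_coeff [:-(c^2*d), 0, 1:] = 1" by simp
    have "(csqrt (of_int d))^2 = of_int d" by simp
    thus "poly (map_poly of_int [:-(c^2*d), 0, 1:]) (of_int c * csqrt (of_int d)) = 0"
      by (simp add: map_poly_pCons power2_eq_square algebra_simps)
  qed
  ultimately show ?thesis unfolding ring_of_integers_def by blast
qed

lemma trivial_sub: "trivial_units_C2 d \<subseteq> group_ring_C2_units d"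
proof
  fix a assume "a \<in> trivial_units_C2 d"
  then obtain u v where uv: "a = (u, 0) \<or> a = (0, u)" "u \<in> ring_of_integers d" "v \<in> ring_of_integers d" "u * v = 1"
    unfolding trivial_units_C2_def oK_units_def by blast
  show "a \<in> group_ring_C2_units d"
    using uv(1)
  proof
    assume a: "a = (u, 0)"
    show ?thesis unfolding group_ring_C2_units_def group_ring_C2_def a
      using uv zero_in_oK by (intro CollectI conjI bexI[of _ "(v, 0)"]) (auto simp: c2_mult_def)
  next
    assume a: "a = (0, u)"
    show ?thesis unfolding group_ring_C2_units_def group_ring_C2_def a
      using uv zero_in_oK by (intro CollectI conjI bexI[of _ "(0, v)"]) (auto simp: c2_mult_def)
  qed
qed

lemma finish:
  assumes "x \<in> ring_of_integers d" "y \<in> ring_of_integers d" "x' \<in> ring_of_integers d" "y' \<in> ring_of_integers d"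
    "x * x' + y * y' = 1" "x = 0 \<or> y = 0"
  shows "(x, y) \<in> trivial_units_C2 d"
  using assms(6)
proof
  assume "y = 0"
  hence "x \<in> oK_units d" using assms unfolding oK_units_def by auto
  thus ?thesis using \<open>y = 0\<close> unfolding trivial_units_C2_def by auto
next
  assume "x = 0"
  hence "y \<in> oK_units d" using assms unfolding oK_units_def by auto
  thus ?thesis using \<open>x = 0\<close> unfolding trivial_units_C2_def by auto
qed

lemma oK_one: "z \<in> ring_of_integers 1 \<Longrightarrow> \<exists>n::int. z = of_int n"
proof -
  assume z: "z \<in> ring_of_integers 1"
  then obtain a b where "z = of_rat a + of_rat b * csqrt (of_int 1)" unfolding ring_of_integers_def quad_field_def by blast
  hence zab: "z = of_rat (a + b)" by (simp add: of_rat_add)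
  hence "algebraic_integer (of_rat (a+b))" using z unfolding ring_of_integers_def by simp
  then obtain n where "a + b = of_int n" using rat_alg_int by blast
  thus ?thesis using zab by simp
qed

lemma units_one: "group_ring_C2_units 1 \<subseteq> trivial_units_C2 1"
proof
  fix a assume "a \<in> group_ring_C2_units 1"
  then obtain x y x' y' where xy: "a = (x, y)" "x \<in> ring_of_integers 1" "y \<in> ring_of_integers 1"
    "x' \<in> ring_of_integers 1" "y' \<in> ring_of_integers 1" "x * x' + y * y' = 1" "x * y' + y * x' = 0"
    unfolding group_ring_C2_units_def group_ring_C2_def c2_mult_def by auto
  obtain p where p: "x = of_int p" using oK_one xy(2) by blast
  obtain q where q: "y = of_int q" using oK_one xy(3) by blast
  obtain p' where p': "x' = of_int p'" using oK_one xy(4) by blast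
  obtain q' where q': "y' = of_int q'" using oK_one xy(5) by blast
  have e1: "p * p' + q * q' = 1" using xy(6) unfolding p q p' q' by (metis of_int_eq_iff of_int_1 of_int_add of_int_mult)
  have e2: "p * q' + q * p' = 0" using xy(7) unfolding p q p' q' by (metis of_int_eq_iff of_int_0 of_int_add of_int_mult)
  have "(p + q) * (p' + q') = 1" using e1 e2 by (simp add: algebra_simps)
  hence s1: "p + q = 1 \<or> p + q = -1" by (auto simp add: zmult_eq_1_iff)
  have "(p - q) * (p' - q') = 1" using e1 e2 by (simp add: algebra_simps)
  hence s2: "p - q = 1 \<or> p - q = -1" by (auto simp add: zmult_eq_1_iff)
  have "p = 0 \<or> q = 0" using s1 s2 by auto
  hence "x = 0 \<or> y = 0" using p q by auto
  thus "a \<in> trivial_units_C2 1" unfolding xy(1) using finish xy by blast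
qed



lemma units_neg:
  assumes d: "d < 0" "squarefree d"
  shows "group_ring_C2_units d \<subseteq> trivial_units_C2 d"
proof
  fix a assume "a \<in> group_ring_C2_units d"
  then obtain x y x' y' where xy: "a = (x, y)" "x \<in> ring_of_integers d" "y \<in> ring_of_integers d"
    "x' \<in> ring_of_integers d" "y' \<in> ring_of_integers d" "x * x' + y * y' = 1" "x * y' + y * x' = 0"
    unfolding group_ring_C2_units_def group_ring_C2_def c2_mult_def by auto
  have r: "isrep d x" "isrep d y" "isrep d x'" "isrep d y'"
    using char_neg[OF d] xy(2-5) unfolding isrep_def by blast+
  obtain k1 where k1: "k1 \<ge> 0" "(cmod (x+y))^2 = of_int k1" using isrep_norm[OF d(1) isrep_add[OF r(1,2)]] by blast
  obtain k2 where k2: "k2 \<ge> 0" "(cmod (x'+y'))^2 = of_int k2" using isrep_norm[OF d(1) isrep_add[OF r(3,4)]] by blast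
  obtain k3 where k3: "k3 \<ge> 0" "(cmod (x-y))^2 = of_int k3" using isrep_norm[OF d(1) isrep_diff[OF r(1,2)]] by blast
  obtain k4 where k4: "k4 \<ge> 0" "(cmod (x'-y'))^2 = of_int k4" using isrep_norm[OF d(1) isrep_diff[OF r(3,4)]] by blast
  obtain k5 where k5: "k5 \<ge> 0" "(cmod x)^2 = of_int k5" using isrep_norm[OF d(1) r(1)] by blast
  obtain k6 where k6: "k6 \<ge> 0" "(cmod y)^2 = of_int k6" using isrep_norm[OF d(1) r(2)] by blast
  have "(x + y) * (x' + y') = 1"
  proof -
    have "(x + y) * (x' + y') = (x * x' + y * y') + (x * y' + y * x')" by (simp add: algebra_simps)
    thus ?thesis using xy(6,7) by simp
  qed
  hence "(cmod (x+y))^2 * (cmod (x'+y'))^2 = 1" by (metis norm_mult norm_one power_mult_distrib power_one)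
  hence "k1 = 1" using k1 k2 int_prod_one by simp
  have "(x - y) * (x' - y') = 1"
  proof -
    have "(x - y) * (x' - y') = (x * x' + y * y') - (x * y' + y * x')" by (simp add: algebra_simps)
    thus ?thesis using xy(6,7) by simp
  qed
  hence "(cmod (x-y))^2 * (cmod (x'-y'))^2 = 1" by (metis norm_mult norm_one power_mult_distrib power_one)
  hence "k3 = 1" using k3 k4 int_prod_one by simp
  have par: "(cmod (x+y))^2 + (cmod (x-y))^2 = 2 * (cmod x)^2 + 2 * (cmod y)^2"
    unfolding cmod_power2 by (simp add: power2_eq_square algebra_simps)
  hence "(of_int (k5 + k6) :: real) = 1" using k1 k3 k5 k6 \<open>k1 = 1\<close> \<open>k3 = 1\<close> by simp
  hence "k5 + k6 = 1" by (metis of_int_1 of_int_eq_iff)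
  hence "k5 = 0 \<or> k6 = 0" using k5 k6 by linarith
  hence "x = 0 \<or> y = 0" using k5 k6 by auto
  thus "a \<in> trivial_units_C2 d" unfolding xy(1) using finish xy by blast
qed

lemma nontrivial_pos:
  assumes d: "d > 1" "squarefree d"
  shows "group_ring_C2_units d \<noteq> trivial_units_C2 d"
proof -
  have ns: "k^2 \<noteq> d" for k
  proof
    assume "k^2 = d"
    hence "k dvd 1" using d(2) squarefreeD[of d k] by simp
    hence "\<bar>k\<bar> = 1" by simp
    hence "k = 1 \<or> k = -1" by linarith
    hence "k^2 = 1" by auto
    thus False using \<open>k^2 = d\<close> d by simp
  qed
  obtain a b where ab: "b \<noteq> 0" "a^2 - d*b^2 = 1" using pell[of d] ns d by auto
  define s where "s = csqrt (of_int d)"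
  have ss: "s * s = of_int d" unfolding s_def by (metis power2_csqrt power2_eq_square)
  have s0: "s \<noteq> 0" unfolding s_def using d by simp
  define u where "u = ((of_int a :: complex), of_int b * s)"
  have "u \<in> group_ring_C2_units d"
    unfolding group_ring_C2_units_def group_ring_C2_def
  proof (intro CollectI conjI bexI[of _ "(of_int a, of_int (-b) * s)"])
    show "u \<in> ring_of_integers d \<times> ring_of_integers d"
      unfolding u_def s_def using int_in_oK sqrt_mult_in_oK by blast
    show "(of_int a, of_int (-b) * s) \<in> ring_of_integers d \<times> ring_of_integers d"
      unfolding s_def using int_in_oK sqrt_mult_in_oK by blast
    have "(of_int (a^2 - d*b^2) :: complex) = 1" using ab(2) by (simp only: of_int_1)
    hence "of_int a * of_int a - of_int b * of_int b * (s * s) = (1::complex)"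
      unfolding ss by (simp add: power2_eq_square algebra_simps)
    thus "c2_mult u (of_int a, of_int (- b) * s) = (1, 0)"
      unfolding u_def c2_mult_def by (simp add: algebra_simps)
  qed
  moreover have "u \<notin> trivial_units_C2 d"
  proof
    assume "u \<in> trivial_units_C2 d"
    hence "of_int a = (0::complex) \<or> of_int b * s = 0" unfolding trivial_units_C2_def u_def by auto
    moreover have "a \<noteq> 0"
    proof
      assume "a = 0"
      hence "d * b^2 = -1" using ab(2) by simp
      moreover have "d * b^2 \<ge> 0" using d by simp
      ultimately show False by simp
    qed
    ultimately show False using ab(1) s0 by simp
  qed
  ultimately show ?thesis by blast
qed

theorem mainTheorem6:
  fixes d :: int
  assumes "squarefree d"
  shows "group_ring_C2_units d = trivial_units_C2 d \<longleftrightarrow> (d = 1 \<or> d < 0)"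
proof
  assume eq: "group_ring_C2_units d = trivial_units_C2 d"
  show "d = 1 \<or> d < 0"
  proof (rule ccontr)
    assume "\<not> (d = 1 \<or> d < 0)"
    moreover have "d \<noteq> 0"
    proof
      assume "d = 0"
      hence "(2::int)^2 dvd d" by simp
      hence "(2::int) dvd 1" using assms squarefreeD[of d 2] by simp
      thus False by simp
    qed
    ultimately have "d > 1" by simp
    thus False using nontrivial_pos assms eq by blast
  qed
next
  assume "d = 1 \<or> d < 0"
  thus "group_ring_C2_units d = trivial_units_C2 d"
    using units_one units_neg[OF _ assms] trivial_sub by blast
qed

end
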